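(* Let $\mathcal{S}=(\mathscr{X},\nabla_{\mathcal{S}})$ be a non-commutative spacetime, $\mathscr{Y}$ a quantale, and $f:\mathscr{X}\to\mathscr{Y}$ a join-preserving strict monoidal map which is an order embedding ($f(a)\le f(b)$ implies $a\le b$) and has a left adjoint $f_!:\mathscr{Y}\to\mathscr{X}$. Then there exists $\nabla:\mathscr{Y}\to\mathscr{Y}$ such that $\mathcal{T}=(\mathscr{Y},\nabla)$ is a non-commutative spacetime and $f:\mathcal{S}\to\mathcal{T}$ is a logical geometric map.
   Context: A monoidal poset is a poset with a monoid structure whose multiplication is monotone in each argument. A quantale is a monoidal poset with all joins whose multiplication distributes over arbitrary joins in each argument. A monotone map between monoidal posets is oplax monoidal if $f(e)\le e$ and $f(a\otimes b)\le f(a)\otimes f(b)$, strict monoidal if equalities hold. A non-commutative spacetime is a pair $(\mathscr{X},\nabla)$ with $\mathscr{X}$ a quantale and $\nabla$ a join-preserving oplax monoidal endomap. Its implication is $a\to_{\mathcal{S}}b=\Box(a\Rightarrow b)$, where $\Box$ is the right adjoint of $\nabla$ and $\Rightarrow$ the right adjoint of $a\otimes(-)$; equivalently $a\otimes\nabla b\le c$ iff $b\le a\to_{\mathcal{S}}c$. A geometric map $f:(\mathscr{X},\nabla_{\mathcal{S}})\to(\mathscr{Y},\nabla_{\mathcal{T}})$ is a join-preserving strict monoidal map with $f\nabla_{\mathcal{S}}=\nabla_{\mathcal{T}}f$; it is logical if moreover $f(a\to_{\mathcal{S}}b)=f(a)\to_{\mathcal{T}}f(b)$. *)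

theory Defs
  imports Main
begin

definition join_preserving :: "('a::complete_lattice \<Rightarrow> 'b::complete_lattice) \<Rightarrow> bool" where
  "join_preserving f \<longleftrightarrow> (\<forall>A. f (Sup A) = Sup (f ` A))"

definition quantale :: "('a::complete_lattice \<Rightarrow> 'a \<Rightarrow> 'a) \<Rightarrow> 'a \<Rightarrow> bool" where
  "quantale m e \<longleftrightarrow>
     (\<forall>a b c. m (m a b) c = m a (m b c)) \<and>
     (\<forall>a. m e a = a) \<and> (\<forall>a. m a e = a) \<and>
     (\<forall>a B. m a (Sup B) = Sup ((\<lambda>b. m a b) ` B)) \<and>
     (\<forall>A b. m (Sup A) b = Sup ((\<lambda>a. m a b) ` A))"

definition oplax_monoidal ::
  "('a::order \<Rightarrow> 'a \<Rightarrow> 'a) \<Rightarrow> 'a \<Rightarrow> ('b::order \<Rightarrow> 'b \<Rightarrow> 'b) \<Rightarrow> 'b \<Rightarrow> ('a \<Rightarrow> 'b) \<Rightarrow> bool" where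
  "oplax_monoidal m e m' e' f \<longleftrightarrow> mono f \<and> f e \<le> e' \<and> (\<forall>a b. f (m a b) \<le> m' (f a) (f b))"

definition strict_monoidal ::
  "('a::order \<Rightarrow> 'a \<Rightarrow> 'a) \<Rightarrow> 'a \<Rightarrow> ('b::order \<Rightarrow> 'b \<Rightarrow> 'b) \<Rightarrow> 'b \<Rightarrow> ('a \<Rightarrow> 'b) \<Rightarrow> bool" where
  "strict_monoidal m e m' e' f \<longleftrightarrow> mono f \<and> f e = e' \<and> (\<forall>a b. f (m a b) = m' (f a) (f b))"

definition nc_spacetime :: "('a::complete_lattice \<Rightarrow> 'a \<Rightarrow> 'a) \<Rightarrow> 'a \<Rightarrow> ('a \<Rightarrow> 'a) \<Rightarrow> bool" where
  "nc_spacetime m e nabla \<longleftrightarrow> quantale m e \<and> join_preserving nabla \<and> oplax_monoidal m e m e nabla"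

text \<open>Box: right adjoint of nabla (given by the standard formula for join-preserving maps).\<close>
definition box :: "('a::complete_lattice \<Rightarrow> 'a) \<Rightarrow> 'a \<Rightarrow> 'a" where
  "box nabla b = Sup {x. nabla x \<le> b}"

text \<open>Residual: right adjoint of a \<otimes> (-).\<close>
definition residual :: "('a::complete_lattice \<Rightarrow> 'a \<Rightarrow> 'a) \<Rightarrow> 'a \<Rightarrow> 'a \<Rightarrow> 'a" where
  "residual m a b = Sup {x. m a x \<le> b}"

definition st_imp :: "('a::complete_lattice \<Rightarrow> 'a \<Rightarrow> 'a) \<Rightarrow> ('a \<Rightarrow> 'a) \<Rightarrow> 'a \<Rightarrow> 'a \<Rightarrow> 'a" where
  "st_imp m nabla a b = box nabla (residual m a b)"

definition geometric_map ::
  "('a::complete_lattice \<Rightarrow> 'a \<Rightarrow> 'a) \<Rightarrow> 'a \<Rightarrow> ('a \<Rightarrow> 'a) \<Rightarrow>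
   ('b::complete_lattice \<Rightarrow> 'b \<Rightarrow> 'b) \<Rightarrow> 'b \<Rightarrow> ('b \<Rightarrow> 'b) \<Rightarrow> ('a \<Rightarrow> 'b) \<Rightarrow> bool" where
  "geometric_map m e nS m' e' nT f \<longleftrightarrow>
     join_preserving f \<and> strict_monoidal m e m' e' f \<and> (\<forall>a. f (nS a) = nT (f a))"

definition logical_map ::
  "('a::complete_lattice \<Rightarrow> 'a \<Rightarrow> 'a) \<Rightarrow> 'a \<Rightarrow> ('a \<Rightarrow> 'a) \<Rightarrow>
   ('b::complete_lattice \<Rightarrow> 'b \<Rightarrow> 'b) \<Rightarrow> 'b \<Rightarrow> ('b \<Rightarrow> 'b) \<Rightarrow> ('a \<Rightarrow> 'b) \<Rightarrow> bool" where
  "logical_map m e nS m' e' nT f \<longleftrightarrow>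
     geometric_map m e nS m' e' nT f \<and>
     (\<forall>a b. f (st_imp m nS a b) = st_imp m' nT (f a) (f b))"

end

theory Submission
  imports Defs
begin

lemma jp_mono:
  assumes "join_preserving g" shows "mono g"
proof (rule monoI)
  fix x y :: 'a assume "x \<le> y"
  then have "Sup {x, y} = y" by (simp add: sup_absorb2)
  then have "g y = Sup (g ` {x, y})" using assms unfolding join_preserving_def by metis
  then show "g x \<le> g y" by (metis sup.cobounded1 image_insert image_empty Sup_insert Sup_empty sup_bot_right)
qed

lemma box_adj:
  assumes "join_preserving g" shows "g x \<le> b \<longleftrightarrow> x \<le> box g b"
proof
  assume "g x \<le> b" then show "x \<le> box g b" unfolding box_def by (simp add: Sup_upper)
next
  assume "x \<le> box g b"
  then have "g x \<le> g (Sup {x. g x \<le> b})" using jp_mono[OF assms] unfolding box_def mono_def by blast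
  also have "\<dots> = Sup (g ` {x. g x \<le> b})" using assms unfolding join_preserving_def by blast
  also have "\<dots> \<le> b" by (auto intro: Sup_least)
  finally show "g x \<le> b" .
qed

lemma res_adj:
  assumes "quantale m e" shows "m a x \<le> b \<longleftrightarrow> x \<le> residual m a b"
proof -
  have "join_preserving (m a)" using assms unfolding quantale_def join_preserving_def by auto
  then show ?thesis using box_adj[of "m a" x b] unfolding box_def residual_def by simp
qed

lemma le_yoneda: "(\<And>y. y \<le> (u::'a::order) \<longleftrightarrow> y \<le> v) \<Longrightarrow> u = v"
  by (meson order.antisym order.refl)

theorem corollary5p13:
  fixes m :: "'a::complete_lattice \<Rightarrow> 'a \<Rightarrow> 'a" and e :: 'a and nS :: "'a \<Rightarrow> 'a"
    and m' :: "'b::complete_lattice \<Rightarrow> 'b \<Rightarrow> 'b" and e' :: 'b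
    and f :: "'a \<Rightarrow> 'b" and fl :: "'b \<Rightarrow> 'a"
  assumes "nc_spacetime m e nS"
    and "quantale m' e'"
    and "join_preserving f"
    and "strict_monoidal m e m' e' f"
    and "\<forall>a b. f a \<le> f b \<longrightarrow> a \<le> b"
    and "\<forall>y x. fl y \<le> x \<longleftrightarrow> y \<le> f x"
  shows "\<exists>nT. nc_spacetime m' e' nT \<and> logical_map m e nS m' e' nT f"
proof -
  note A = assms
  have qX: "quantale m e" and jS: "join_preserving nS" and oS: "oplax_monoidal m e m e nS"
    using A(1) unfolding nc_spacetime_def by auto
  have mf: "mono f" and fe: "f e = e'" and fm: "\<And>a b. f (m a b) = m' (f a) (f b)"
    using A(4) unfolding strict_monoidal_def by auto
  have mS: "mono nS" and Se: "nS e \<le> e" and Sm: "\<And>a b. nS (m a b) \<le> m (nS a) (nS b)"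
    using oS unfolding oplax_monoidal_def by auto
  have adj: "\<And>y x. fl y \<le> x \<longleftrightarrow> y \<le> f x" using A(6) by blast
  have emb: "\<And>a b. f a \<le> f b \<longleftrightarrow> a \<le> b" using A(5) mf by (meson monoD)
  have unit: "\<And>y. y \<le> f (fl y)" using adj by blast
  have flf: "\<And>a. fl (f a) = a"
    by (rule le_yoneda[symmetric]) (metis adj emb order.antisym order.refl)
  have jfl: "join_preserving fl"
    unfolding join_preserving_def
  proof
    fix A
    show "fl (Sup A) = Sup (fl ` A)"
    proof (rule order.antisym)
      have "\<forall>a\<in>A. a \<le> f (Sup (fl ` A))"
        using adj by (metis Sup_upper imageI)
      then show "fl (Sup A) \<le> Sup (fl ` A)" using adj by (simp add: Sup_least)
      have "\<forall>a\<in>A. fl a \<le> fl (Sup A)" using adj unit by (meson Sup_upper order_trans)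
      then show "Sup (fl ` A) \<le> fl (Sup A)" by (auto intro: Sup_least)
    qed
  qed
  have mfl: "mono fl" using jp_mono[OF jfl] .
  have mmX: "\<And>a b c d. a \<le> b \<Longrightarrow> c \<le> d \<Longrightarrow> m a c \<le> m b d"
  proof -
    have j1: "\<And>a. join_preserving (m a)" and j2: "\<And>b. join_preserving (\<lambda>a. m a b)"
      using qX unfolding quantale_def join_preserving_def by auto
    fix a b c d :: 'a assume "a \<le> b" "c \<le> d"
    then show "m a c \<le> m b d" using jp_mono[OF j1] jp_mono[OF j2] unfolding mono_def
      by (meson order_trans)
  qed
  have mmY: "\<And>a b c d. a \<le> b \<Longrightarrow> c \<le> d \<Longrightarrow> m' a c \<le> m' b d"
  proof -
    have j1: "\<And>a. join_preserving (m' a)" and j2: "\<And>b. join_preserving (\<lambda>a. m' a b)"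
      using A(2) unfolding quantale_def join_preserving_def by auto
    fix a b c d :: 'b assume "a \<le> b" "c \<le> d"
    then show "m' a c \<le> m' b d" using jp_mono[OF j1] jp_mono[OF j2] unfolding mono_def
      by (meson order_trans)
  qed
  define nT where "nT = (\<lambda>y. f (nS (fl y)))"
  have jT: "join_preserving nT"
    using A(3) jS jfl unfolding join_preserving_def nT_def by (simp add: image_image)
  have Te: "nT e' \<le> e'"
  proof -
    have "fl e' \<le> e" using adj fe by simp
    then have "nS (fl e') \<le> e" using mS Se by (meson monoD order_trans)
    then show ?thesis unfolding nT_def using mf fe by (metis monoD)
  qed
  have Tm: "nT (m' a b) \<le> m' (nT a) (nT b)" for a b
  proof -
    have "m' a b \<le> f (m (fl a) (fl b))" using fm unit mmY by simp
    then have "fl (m' a b) \<le> m (fl a) (fl b)" using adj by simp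
    then have "nS (fl (m' a b)) \<le> m (nS (fl a)) (nS (fl b))" using mS Sm by (meson monoD order_trans)
    then show ?thesis unfolding nT_def using mf fm by (metis monoD)
  qed
  have mT: "mono nT" using jp_mono[OF jT] .
  have ncT: "nc_spacetime m' e' nT"
    unfolding nc_spacetime_def oplax_monoidal_def using A(2) jT mT Te Tm by auto
  have comm: "\<And>a. f (nS a) = nT (f a)" unfolding nT_def using flf by simp
  have geo: "geometric_map m e nS m' e' nT f"
    unfolding geometric_map_def using A(3) A(4) comm by auto
  have log: "f (st_imp m nS a b) = st_imp m' nT (f a) (f b)" for a b
  proof (rule le_yoneda)
    fix y
    have "y \<le> st_imp m' nT (f a) (f b) \<longleftrightarrow> m' (f a) (nT y) \<le> f b"
      unfolding st_imp_def using box_adj[OF jT] res_adj[OF A(2)] by metis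
    also have "\<dots> \<longleftrightarrow> m a (nS (fl y)) \<le> b" unfolding nT_def using fm emb by metis
    also have "\<dots> \<longleftrightarrow> fl y \<le> st_imp m nS a b"
      unfolding st_imp_def using box_adj[OF jS] res_adj[OF qX] by metis
    also have "\<dots> \<longleftrightarrow> y \<le> f (st_imp m nS a b)" using adj by simp
    finally show "y \<le> f (st_imp m nS a b) \<longleftrightarrow> y \<le> st_imp m' nT (f a) (f b)" by simp
  qed
  show ?thesis using ncT geo log unfolding logical_map_def by blast
qed

end
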